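(* Let $\ell$ be a positive integer and $n$ an integer such that $a:=n/\ell\in\mathbb Z$ and $n\ell+\ell^2>0$. For $u,v\in\mathbb C$, $\tau\in\mathbb H$, $n'\in\mathbb R$ and $\ell'\in\mathbb Z$ define $$\chi_{\mathsf A^{n,\ell}_{n',\ell'}}(u,v;\tau)=-i\,\frac{\theta_1(u;\tau)}{\eta(\tau)^3}\sum_{m\in\mathbb Z}\frac{(-1)^{k}e^{2\pi i v k}\,e^{2\pi i u(ak+n'+\frac12)}\,e^{\pi i\tau k(k(2a+1)+2n'+1)}}{1-e^{2\pi i(u+k\tau)}},\qquad k=m\ell+\ell',$$ for $u$ such that no denominator vanishes. Then, writing $y=e^{2\pi i v}$, $z=e^{2\pi i u}$, $$\chi_{\mathsf A^{n,\ell}_{n',\ell'}}(u+1,v;\tau)=e^{2\pi i(a\ell'+n')}\chi_{\mathsf A^{n,\ell}_{n',\ell'}}(u,v;\tau),\qquad \chi_{\mathsf A^{n,\ell}_{n',\ell'}}(u+\tau,v;\tau)=y^{-1}\chi_{\mathsf A^{n,\ell}_{n'-a-1,\ell'+1}}(u,v;\tau),$$ $$\chi_{\mathsf A^{n,\ell}_{n',\ell'}}(u,v+1;\tau)=\chi_{\mathsf A^{n,\ell}_{n',\ell'}}(u,v;\tau),\qquad \chi_{\mathsf A^{n,\ell}_{n',\ell'}}(u,v+\tau;\tau)=z^{-1}\chi_{\mathsf A^{n,\ell}_{n'+1,\ell'}}(u,v;\tau),$$ and more generally, for every $\alpha\in\mathbb R$, $$\chi_{\mathsf A^{n,\ell}_{n',\ell'}}(u,v+\alpha\tau;\tau)=e^{-2\pi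 i\alpha u}\,\chi_{\mathsf A^{n,\ell}_{n'+\alpha,\ell'}}(u,v;\tau).$$
   Context: $\theta_1(u;\tau)=-i\sum_{n\in\mathbb Z}(-1)^n e^{\pi i(n+\frac12)^2\tau+2\pi i u(n+\frac12)}$ and $\eta(\tau)=e^{\pi i\tau/12}\prod_{j\ge1}(1-e^{2\pi i j\tau})$. The function $\chi_{\mathsf A^{n,\ell}_{n',\ell'}}$ is the character of the atypical module $\mathsf A^{n,\ell}_{n',\ell'}$ of a W-superalgebra extending $\widehat{\mathfrak{gl}}(1|1)$; here it is taken as defined by the displayed formula. *)

theory Defs
  imports "HOL-Analysis.Analysis"
begin

definition theta1 :: "complex \<Rightarrow> complex \<Rightarrow> complex" where
  "theta1 u \<tau> = - \<i> * (\<Sum>\<^sub>\<infinity>n::int. (-1) powi n *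
      exp (pi * \<i> * (of_int n + 1/2)^2 * \<tau> + 2 * pi * \<i> * u * (of_int n + 1/2)))"

definition eta :: "complex \<Rightarrow> complex" where
  "eta \<tau> = exp (pi * \<i> * \<tau> / 12) * (\<Prod>j. (1 - exp (2 * pi * \<i> * of_nat (Suc j) * \<tau>)))"

text \<open>Character of the atypical module A^{n,l}_{n',l'}; here a = n div l (assumed exact).\<close>
definition chiA :: "int \<Rightarrow> int \<Rightarrow> real \<Rightarrow> int \<Rightarrow> complex \<Rightarrow> complex \<Rightarrow> complex \<Rightarrow> complex" where
  "chiA n l n' l' u v \<tau> =
     (let a = n div l in
      - \<i> * theta1 u \<tau> / eta \<tau> ^ 3 *
      (\<Sum>\<^sub>\<infinity>m::int. let k = m * l + l' in
         (-1) powi k * exp (2 * pi * \<i> * v * of_int k)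
         * exp (2 * pi * \<i> * u * (of_int a * of_int k + of_real n' + 1/2))
         * exp (pi * \<i> * \<tau> * of_int k * (of_int k * (2 * of_int a + 1) + 2 * of_real n' + 1))
         / (1 - exp (2 * pi * \<i> * (u + of_int k * \<tau>)))))"

definition admissible :: "int \<Rightarrow> int \<Rightarrow> complex \<Rightarrow> complex \<Rightarrow> bool" where
  "admissible l l' u \<tau> \<longleftrightarrow>
     (\<forall>m::int. 1 - exp (2 * pi * \<i> * (u + of_int (m * l + l') * \<tau>)) \<noteq> 0)"

end

theory Submission imports Defs begin

lemma sum_scale:
  fixes f g :: "int \<Rightarrow> complex"
  assumes "\<And>m. f m = c * g m"
  shows "infsum f UNIV = c * infsum g UNIV"
proof -
  have "f = (\<lambda>m. c * g m)" using assms by auto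
  then show ?thesis by (simp add: infsum_cmult_right')
qed

lemma exp_int2pi: "exp (2 * pi * \<i> * of_int j) = 1"
proof -
  have "exp ((2 * of_int j * pi) * \<i>) = 1" by (rule exp_integer_2pi) simp
  moreover have "(2 * of_int j * pi) * \<i> = 2 * pi * \<i> * (of_int j :: complex)" by simp
  ultimately show ?thesis by metis
qed

lemma theta1_shift1: "theta1 (u + 1) \<tau> = - theta1 u \<tau>"
proof -
  have "\<And>n::int. (-1) powi n * exp (pi * \<i> * (of_int n + 1/2)^2 * \<tau> + 2 * pi * \<i> * (u+1) * (of_int n + 1/2))
     = (-1) * ((-1) powi n * exp (pi * \<i> * (of_int n + 1/2)^2 * \<tau> + 2 * pi * \<i> * u * (of_int n + 1/2)))"
  proof -
    fix n :: int
    have "pi * \<i> * (of_int n + 1/2)^2 * \<tau> + 2 * pi * \<i> * (u+1) * (of_int n + 1/2)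
      = (pi * \<i> * (of_int n + 1/2)^2 * \<tau> + 2 * pi * \<i> * u * (of_int n + 1/2)) + 2 * pi * \<i> * of_int n + pi * \<i>"
      by (simp add: algebra_simps)
    then have "exp (pi * \<i> * (of_int n + 1/2)^2 * \<tau> + 2 * pi * \<i> * (u+1) * (of_int n + 1/2))
       = exp (pi * \<i> * (of_int n + 1/2)^2 * \<tau> + 2 * pi * \<i> * u * (of_int n + 1/2)) * exp (2 * pi * \<i> * of_int n) * exp (pi * \<i>)"
      by (simp add: exp_add)
    then show "?thesis n" by (simp only: exp_int2pi mult_1_right exp_pi_i) simp
  qed
  then show ?thesis unfolding theta1_def
    by (subst sum_scale[of _ "-1"]) auto
qed

lemma theta1_shift_tau: "theta1 (u + \<tau>) \<tau> = - exp (- pi * \<i> * \<tau> - 2 * pi * \<i> * u) * theta1 u \<tau>"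
proof -
  define g where "g = (\<lambda>n::int. (-1) powi n * exp (pi * \<i> * (of_int n + 1/2)^2 * \<tau> + 2 * pi * \<i> * u * (of_int n + 1/2)))"
  have "\<And>n::int. (-1) powi n * exp (pi * \<i> * (of_int n + 1/2)^2 * \<tau> + 2 * pi * \<i> * (u+\<tau>) * (of_int n + 1/2))
     = (- exp (- pi * \<i> * \<tau> - 2 * pi * \<i> * u)) * g (n + 1)"
  proof -
    fix n :: int
    have "pi * \<i> * (of_int n + 1/2)^2 * \<tau> + 2 * pi * \<i> * (u+\<tau>) * (of_int n + 1/2)
      = (- pi * \<i> * \<tau> - 2 * pi * \<i> * u) + (pi * \<i> * (of_int (n+1) + 1/2)^2 * \<tau> + 2 * pi * \<i> * u * (of_int (n+1) + 1/2))"
      by (simp add: algebra_simps power2_eq_square)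
    then have e: "exp (pi * \<i> * (of_int n + 1/2)^2 * \<tau> + 2 * pi * \<i> * (u+\<tau>) * (of_int n + 1/2))
       = exp (- pi * \<i> * \<tau> - 2 * pi * \<i> * u) * exp (pi * \<i> * (of_int (n+1) + 1/2)^2 * \<tau> + 2 * pi * \<i> * u * (of_int (n+1) + 1/2))"
      by (simp add: exp_add)
    have s: "(-1::complex) powi (n+1) = - ((-1) powi n)"
      by (simp add: power_int_add)
    show "?thesis n" unfolding g_def e s by simp
  qed
  then have "theta1 (u + \<tau>) \<tau> = - \<i> * ((- exp (- pi * \<i> * \<tau> - 2 * pi * \<i> * u)) * infsum (\<lambda>n. g (n+1)) UNIV)"
    unfolding theta1_def by (subst sum_scale[of _ "- exp (- pi * \<i> * \<tau> - 2 * pi * \<i> * u)"]) auto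
  moreover have "infsum (\<lambda>n. g (n+1)) UNIV = infsum g UNIV"
    by (rule infsum_reindex_bij_betw) (metis bij_plus_right bij_betw_def surj_plus_right bij_betw_imp_surj)
  ultimately show ?thesis unfolding theta1_def g_def by simp
qed

definition tm :: "int \<Rightarrow> real \<Rightarrow> int \<Rightarrow> complex \<Rightarrow> complex \<Rightarrow> complex \<Rightarrow> complex" where
  "tm a n' k u v \<tau> = (-1) powi k * exp (2 * pi * \<i> * v * of_int k)
         * exp (2 * pi * \<i> * u * (of_int a * of_int k + of_real n' + 1/2))
         * exp (pi * \<i> * \<tau> * of_int k * (of_int k * (2 * of_int a + 1) + 2 * of_real n' + 1))
         / (1 - exp (2 * pi * \<i> * (u + of_int k * \<tau>)))"

lemma tm_alt: "tm a n' k u v \<tau> = (-1) powi k * exp (2 * pi * \<i> * v * of_int k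
         + 2 * pi * \<i> * u * (of_int a * of_int k + of_real n' + 1/2)
         + pi * \<i> * \<tau> * of_int k * (of_int k * (2 * of_int a + 1) + 2 * of_real n' + 1))
         / (1 - exp (2 * pi * \<i> * (u + of_int k * \<tau>)))"
  unfolding tm_def by (simp add: exp_add)

lemma chiA_tm: "chiA n l n' l' u v \<tau> = - \<i> * theta1 u \<tau> / eta \<tau> ^ 3 *
   infsum (\<lambda>m. tm (n div l) n' (m * l + l') u v \<tau>) UNIV"
  unfolding chiA_def tm_def Let_def by simp

lemma tm_u1: "tm a n' (m * l + l') (u + 1) v \<tau> = (- exp (2 * pi * \<i> * (of_int (a * l') + of_real n'))) * tm a n' (m * l + l') u v \<tau>"
proof -
  let ?k = "m * l + l'"
  have d: "exp (2 * pi * \<i> * (u + 1 + of_int ?k * \<tau>)) = exp (2 * pi * \<i> * (u + of_int ?k * \<tau>))"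
  proof -
    have "2 * pi * \<i> * (u + 1 + of_int ?k * \<tau>) = 2 * pi * \<i> * (u + of_int ?k * \<tau>) + 2 * pi * \<i>"
      by (simp add: algebra_simps)
    then show ?thesis by (simp add: exp_add)
  qed
  define A where "A = 2 * pi * \<i> * v * of_int ?k
         + 2 * pi * \<i> * u * (of_int a * of_int ?k + of_real n' + 1/2)
         + pi * \<i> * \<tau> * of_int ?k * (of_int ?k * (2 * of_int a + 1) + 2 * of_real n' + 1)"
  have "2 * pi * \<i> * v * of_int ?k
         + 2 * pi * \<i> * (u + 1) * (of_int a * of_int ?k + of_real n' + 1/2)
         + pi * \<i> * \<tau> * of_int ?k * (of_int ?k * (2 * of_int a + 1) + 2 * of_real n' + 1)
       = A + 2 * pi * \<i> * (of_int (a * l') + of_real n') + 2 * pi * \<i> * of_int (a * m * l) + pi * \<i>"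
    unfolding A_def by (simp add: algebra_simps)
  then have e: "exp (2 * pi * \<i> * v * of_int ?k
         + 2 * pi * \<i> * (u + 1) * (of_int a * of_int ?k + of_real n' + 1/2)
         + pi * \<i> * \<tau> * of_int ?k * (of_int ?k * (2 * of_int a + 1) + 2 * of_real n' + 1))
       = exp A * exp (2 * pi * \<i> * (of_int (a * l') + of_real n')) * exp (2 * pi * \<i> * of_int (a * m * l)) * exp (pi * \<i>)"
    by (simp add: exp_add)
  show ?thesis unfolding tm_alt d e A_def[symmetric] by (simp only: exp_int2pi mult_1_right exp_pi_i) simp
qed

lemma tm_utau: "tm a n' k (u + \<tau>) v \<tau> = (- exp (pi * \<i> * \<tau> + 2 * pi * \<i> * u - 2 * pi * \<i> * v)) * tm a (n' - of_int a - 1) (k + 1) u v \<tau>"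
proof -
  have d: "exp (2 * pi * \<i> * (u + \<tau> + of_int k * \<tau>)) = exp (2 * pi * \<i> * (u + of_int (k + 1) * \<tau>))"
    by (simp add: algebra_simps)
  have e: "exp (2 * pi * \<i> * v * of_int k
         + 2 * pi * \<i> * (u + \<tau>) * (of_int a * of_int k + of_real n' + 1/2)
         + pi * \<i> * \<tau> * of_int k * (of_int k * (2 * of_int a + 1) + 2 * of_real n' + 1))
       = exp (pi * \<i> * \<tau> + 2 * pi * \<i> * u - 2 * pi * \<i> * v) * exp (2 * pi * \<i> * v * of_int (k+1)
         + 2 * pi * \<i> * u * (of_int a * of_int (k+1) + of_real (n' - of_int a - 1) + 1/2)
         + pi * \<i> * \<tau> * of_int (k+1) * (of_int (k+1) * (2 * of_int a + 1) + 2 * of_real (n' - of_int a - 1) + 1))"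
    unfolding exp_add[symmetric] by (rule arg_cong[where f=exp]) (simp add: algebra_simps)
  have s: "(-1::complex) powi (k+1) = - ((-1) powi k)"
    by (simp add: power_int_add)
  show ?thesis unfolding tm_alt d e s by simp
qed

lemma tm_valpha: "tm a n' k u (v + of_real \<alpha> * \<tau>) \<tau> = exp (- 2 * pi * \<i> * of_real \<alpha> * u) * tm a (n' + \<alpha>) k u v \<tau>"
proof -
  have e: "exp (2 * pi * \<i> * (v + of_real \<alpha> * \<tau>) * of_int k
         + 2 * pi * \<i> * u * (of_int a * of_int k + of_real n' + 1/2)
         + pi * \<i> * \<tau> * of_int k * (of_int k * (2 * of_int a + 1) + 2 * of_real n' + 1))
       = exp (- 2 * pi * \<i> * of_real \<alpha> * u) * exp (2 * pi * \<i> * v * of_int k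
         + 2 * pi * \<i> * u * (of_int a * of_int k + of_real (n' + \<alpha>) + 1/2)
         + pi * \<i> * \<tau> * of_int k * (of_int k * (2 * of_int a + 1) + 2 * of_real (n' + \<alpha>) + 1))"
    unfolding exp_add[symmetric] by (rule arg_cong[where f=exp]) (simp add: algebra_simps)
  show ?thesis unfolding tm_alt e by simp
qed

lemma tm_v1: "tm a n' k u (v + 1) \<tau> = tm a n' k u v \<tau>"
proof -
  have "exp (2 * pi * \<i> * (v + 1) * of_int k) = exp (2 * pi * \<i> * v * of_int k) * exp (2 * pi * \<i> * of_int k)"
    unfolding exp_add[symmetric] by (rule arg_cong[where f=exp]) (simp add: algebra_simps)
  then show ?thesis unfolding tm_def by (simp only: exp_int2pi mult_1_right)
qed

theorem mainTheorem3:
  fixes l n l' :: int and n' \<alpha> :: real and u v \<tau> :: complex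
  assumes "l > 0" and "l dvd n" and "n * l + l^2 > 0" and "Im \<tau> > 0"
  defines "a \<equiv> n div l"
  shows
   "(admissible l l' u \<tau> \<longrightarrow>
       chiA n l n' l' (u + 1) v \<tau> = exp (2 * pi * \<i> * (of_int (a * l') + of_real n')) * chiA n l n' l' u v \<tau>)
  \<and> (admissible l l' (u + \<tau>) \<tau> \<longrightarrow>
       chiA n l n' l' (u + \<tau>) v \<tau> = inverse (exp (2 * pi * \<i> * v)) * chiA n l (n' - of_int a - 1) (l' + 1) u v \<tau>)
  \<and> (admissible l l' u \<tau> \<longrightarrow>
       chiA n l n' l' u (v + 1) \<tau> = chiA n l n' l' u v \<tau>)
  \<and> (admissible l l' u \<tau> \<longrightarrow>
       chiA n l n' l' u (v + \<tau>) \<tau> = inverse (exp (2 * pi * \<i> * u)) * chiA n l (n' + 1) l' u v \<tau>)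
  \<and> (admissible l l' u \<tau> \<longrightarrow>
       chiA n l n' l' u (v + of_real \<alpha> * \<tau>) \<tau> = exp (- 2 * pi * \<i> * of_real \<alpha> * u) * chiA n l (n' + \<alpha>) l' u v \<tau>)"
proof -
  have P1: "chiA n l n' l' (u + 1) v \<tau> = exp (2 * pi * \<i> * (of_int (a * l') + of_real n')) * chiA n l n' l' u v \<tau>"
    unfolding chiA_tm theta1_shift1 a_def[symmetric]
    by (subst sum_scale[OF tm_u1]) simp
  have P2: "chiA n l n' l' (u + \<tau>) v \<tau> = inverse (exp (2 * pi * \<i> * v)) * chiA n l (n' - of_int a - 1) (l' + 1) u v \<tau>"
  proof -
    have r: "\<And>m. tm a n' (m * l + l') (u + \<tau>) v \<tau> = (- exp (pi * \<i> * \<tau> + 2 * pi * \<i> * u - 2 * pi * \<i> * v)) * tm a (n' - of_int a - 1) (m * l + (l' + 1)) u v \<tau>"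
      using tm_utau by (simp add: add.assoc)
    have x: "exp (- pi * \<i> * \<tau> - 2 * pi * \<i> * u) * exp (pi * \<i> * \<tau> + 2 * pi * \<i> * u - 2 * pi * \<i> * v)
       = inverse (exp (2 * pi * \<i> * v))"
      unfolding exp_add[symmetric] exp_minus[symmetric] by (rule arg_cong[where f=exp]) (simp add: algebra_simps)
    show ?thesis unfolding chiA_tm theta1_shift_tau a_def[symmetric]
      by (subst sum_scale[OF r], simp only: x[symmetric]) (simp add: field_simps)
  qed
  have P5: "\<And>\<alpha>. chiA n l n' l' u (v + of_real \<alpha> * \<tau>) \<tau> = exp (- 2 * pi * \<i> * of_real \<alpha> * u) * chiA n l (n' + \<alpha>) l' u v \<tau>"
    unfolding chiA_tm a_def[symmetric]
    by (subst sum_scale[OF tm_valpha]) simp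
  have P3: "chiA n l n' l' u (v + 1) \<tau> = chiA n l n' l' u v \<tau>"
    unfolding chiA_tm tm_v1 ..
  have P4: "chiA n l n' l' u (v + \<tau>) \<tau> = inverse (exp (2 * pi * \<i> * u)) * chiA n l (n' + 1) l' u v \<tau>"
    using P5[of 1] by (simp add: exp_minus[symmetric])
  show ?thesis using P1 P2 P3 P4 P5 by blast
qed

end
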